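(* Let $a_i,b_i,c_i,x_i,y_i\in\mathbb{C}$ and $d_i,e_i\in\mathbb{C}\setminus\{q^{-m}:m\ge0\}$ for $i=1,2$, and let $t\in\mathbb{C}$. Assume $x_1\neq0$ and $|t|\max(|x_1|,|y_1|)\max(|x_2|,|y_2|)<1$. Then $$\sum_{n=0}^\infty\phi_n^{(a_1,b_1,c_1;d_1,e_1)}(x_1,y_1|q)\,\phi_n^{(a_2,b_2,c_2;d_2,e_2)}(x_2,y_2|q)\frac{t^n}{(q;q)_n}$$ $$=\frac{1}{(x_1x_2t;q)_\infty}\sum_{n=0}^\infty\frac{(a_2,b_2,c_2;q)_n(x_1y_2t)^n}{(q,d_2,e_2;q)_n}\sum_{j=0}^{n}\frac{(q^{n-j+1},x_1x_2t,a_1,b_1,c_1;q)_j}{(q,d_1,e_1;q)_j}\Big(\frac{y_1}{x_1}\Big)^j\sum_{l=0}^\infty\frac{(a_1q^j,b_1q^j,c_1q^j;q)_l}{(q,d_1q^j,e_1q^j;q)_l}(x_2y_1t)^l.$$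
   Context: Throughout, $0<q<1$. $(\alpha;q)_0=1$, $(\alpha;q)_n=\prod_{j=0}^{n-1}(1-\alpha q^j)$, $(\alpha;q)_\infty=\prod_{j\ge0}(1-\alpha q^j)$, and $(\alpha_1,\dots,\alpha_r;q)_n=\prod_i(\alpha_i;q)_n$. $\begin{bmatrix}n\\k\end{bmatrix}=\frac{(q;q)_n}{(q;q)_k(q;q)_{n-k}}$. $$\phi_n^{(a,b,c;d,e)}(x,y|q)=\sum_{k=0}^n\begin{bmatrix}n\\k\end{bmatrix}\frac{(a,b,c;q)_k}{(d,e;q)_k}x^{n-k}y^k.$$ *)

theory Defs
  imports "HOL-Analysis.Analysis"
begin

definition qpoch :: "complex \<Rightarrow> complex \<Rightarrow> nat \<Rightarrow> complex" where
  "qpoch a q n = (\<Prod>j<n. 1 - a * q ^ j)"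

definition qpoch_inf :: "complex \<Rightarrow> complex \<Rightarrow> complex" where
  "qpoch_inf a q = (\<Prod>j. 1 - a * q ^ j)"

definition qbinom :: "complex \<Rightarrow> nat \<Rightarrow> nat \<Rightarrow> complex" where
  "qbinom q n k = qpoch q q n / (qpoch q q k * qpoch q q (n - k))"

definition qphi :: "complex \<Rightarrow> complex \<Rightarrow> complex \<Rightarrow> complex \<Rightarrow> complex \<Rightarrow> complex \<Rightarrow> complex
    \<Rightarrow> complex \<Rightarrow> nat \<Rightarrow> complex" where
  "qphi a b c d e x y q n =
     (\<Sum>k\<le>n. qbinom q n k * (qpoch a q k * qpoch b q k * qpoch c q k)
                / (qpoch d q k * qpoch e q k) * x ^ (n - k) * y ^ k)"

end

theory Submission
  imports Defs
begin

lemma qpoch_0[simp]: "qpoch a q 0 = 1" by (simp add: qpoch_def)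
lemma qpoch_Suc: "qpoch a q (Suc n) = qpoch a q n * (1 - a*q^n)"
  by (simp add: qpoch_def)
lemma qpoch_add: "qpoch a q (j+l) = qpoch a q j * qpoch (a*q^j) q l"
  by (induction l) (simp_all add: qpoch_Suc power_add mult.assoc)

lemma norm_Q_pow: "norm (complex_of_real q ^ i) = \<bar>q\<bar> ^ i"
  by (simp add: norm_power)

lemma qpoch_norm_bound:
  assumes q: "0 < q" "q < 1"
  shows "norm (qpoch a (complex_of_real q) n) \<le> exp (norm a / (1 - q))"
proof -
  have "norm (qpoch a (complex_of_real q) n) = (\<Prod>i<n. norm (1 - a * complex_of_real q ^ i))"
    by (simp add: qpoch_def prod_norm)
  also have "\<dots> \<le> (\<Prod>i<n. exp (norm a * q ^ i))"
  proof (rule prod_mono)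
    fix i assume "i \<in> {..<n}"
    have "norm (1 - a * complex_of_real q ^ i) \<le> 1 + norm a * q ^ i"
      using norm_triangle_ineq4[of 1 "a * complex_of_real q ^ i"] q
      by (simp add: norm_mult norm_power)
    also have "\<dots> \<le> exp (norm a * q ^ i)" by (rule exp_ge_add_one_self)
    finally show "0 \<le> norm (1 - a * complex_of_real q ^ i) \<and> norm (1 - a * complex_of_real q ^ i) \<le> exp (norm a * q ^ i)"
      by simp
  qed
  also have "\<dots> = exp (\<Sum>i<n. norm a * q ^ i)" by (simp add: exp_sum)
  also have "\<dots> \<le> exp (norm a / (1 - q))"
  proof -
    have "(\<Sum>i<n. q ^ i) \<le> (\<Sum>i. q ^ i)"
      by (rule sum_le_suminf) (use q in \<open>auto intro: summable_geometric\<close>)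
    also have "\<dots> = 1 / (1 - q)" using suminf_geometric[of q] q by simp
    finally have "(\<Sum>i<n. q ^ i) \<le> 1 / (1 - q)" .
    hence "norm a * (\<Sum>i<n. q ^ i) \<le> norm a * (1 / (1 - q))"
      by (rule mult_left_mono) auto
    hence "(\<Sum>i<n. norm a * q ^ i) \<le> norm a * (1 / (1 - q))"
      by (simp add: sum_distrib_left)
    thus ?thesis by simp
  qed
  finally show ?thesis .
qed

lemma inv_prod_bounded:
  fixes w :: "nat \<Rightarrow> complex"
  assumes s: "summable (\<lambda>k. norm (w k))" and nz: "\<And>k. w k \<noteq> 1"
  shows "\<exists>C. \<forall>n. norm (1 / (\<Prod>i<n. 1 - w i)) \<le> C"
proof -
  have "convergent_prod (\<lambda>k. 1 + (- w k))"
    by (rule summable_imp_convergent_prod_complex) (use s nz in \<open>auto simp: add_eq_0_iff\<close>)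
  hence cp: "convergent_prod (\<lambda>k. 1 - w k)" by simp
  have L0: "prodinf (\<lambda>k. 1 - w k) \<noteq> 0"
    by (rule prodinf_nonzero[OF cp]) (use nz in auto)
  have "(\<lambda>n. \<Prod>i\<le>n. 1 - w i) \<longlonglongrightarrow> prodinf (\<lambda>k. 1 - w k)"
    by (rule convergent_prod_LIMSEQ[OF cp])
  hence "(\<lambda>n. 1 / (\<Prod>i\<le>n. 1 - w i)) \<longlonglongrightarrow> 1 / prodinf (\<lambda>k. 1 - w k)"
    using L0 by (intro tendsto_divide) auto
  hence "Bseq (\<lambda>n. 1 / (\<Prod>i\<le>n. 1 - w i))" by (rule convergent_imp_Bseq[OF convergentI])
  then obtain K where K: "\<And>n. norm (1 / (\<Prod>i\<le>n. 1 - w i)) \<le> K" using BseqE by metis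
  have "norm (1 / (\<Prod>i<n. 1 - w i)) \<le> max 1 K" for n
  proof (cases n)
    case 0 thus ?thesis by simp
  next
    case (Suc m) thus ?thesis using K[of m] by (simp add: lessThan_Suc_atMost)
  qed
  thus ?thesis by blast
qed

lemma qpoch_inv_bounded:
  assumes q: "0 < q" "q < 1" and nz: "\<forall>m::nat. d \<noteq> 1 / complex_of_real q ^ m"
  shows "\<exists>C. \<forall>n. norm (1 / qpoch d (complex_of_real q) n) \<le> C"
proof -
  have "summable (\<lambda>k. norm d * q ^ k)"
    using q by (intro summable_mult summable_geometric) auto
  hence s: "summable (\<lambda>k. norm (d * complex_of_real q ^ k))"
    using q by (simp add: norm_mult norm_power)
  have "d * complex_of_real q ^ k \<noteq> 1" for k
  proof
    assume "d * complex_of_real q ^ k = 1"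
    hence "d = 1 / complex_of_real q ^ k" using q by (auto simp: field_simps)
    with nz show False by blast
  qed
  from inv_prod_bounded[OF s this] show ?thesis by (simp add: qpoch_def)
qed

lemma q_pow_Suc_lt:
  assumes q: "0 < q" "q < (1::real)"
  shows "q * q ^ i < 1"
proof -
  have "q ^ i \<le> 1" using q by (simp add: power_le_one)
  hence "q * q ^ i \<le> q * 1" by (rule mult_left_mono) (use q in auto)
  thus ?thesis using q by linarith
qed

lemma qf_nonzero:
  assumes q: "0 < q" "q < 1"
  shows "qpoch (complex_of_real q) (complex_of_real q) n \<noteq> 0"
proof -
  have "complex_of_real q * complex_of_real q ^ i \<noteq> 1" for i
  proof -
    have "norm (complex_of_real q * complex_of_real q ^ i) = q * q ^ i" using q by (simp add: norm_mult norm_power)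
    also have "\<dots> < 1" using q_pow_Suc_lt[OF q] .
    finally show ?thesis by auto
  qed
  thus ?thesis by (simp add: qpoch_def)
qed

lemma qf_inv_bounded:
  assumes q: "0 < q" "q < 1"
  shows "\<exists>C. \<forall>n. norm (1 / qpoch (complex_of_real q) (complex_of_real q) n) \<le> C"
proof (rule qpoch_inv_bounded[OF q], rule allI)
  fix m :: nat
  have "norm (complex_of_real q) * norm (complex_of_real q ^ m) < 1"
    using q q_pow_Suc_lt[OF q, of m] by (simp add: norm_power)
  hence "complex_of_real q * complex_of_real q ^ m \<noteq> 1"
    by (metis norm_mult norm_one order_less_irrefl)
  thus "complex_of_real q \<noteq> 1 / complex_of_real q ^ m"
    using q by (auto simp: field_simps)
qed

definition Eu :: "real \<Rightarrow> complex \<Rightarrow> complex" where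
  "Eu q w = (\<Sum>p. inverse (qpoch (complex_of_real q) (complex_of_real q) p) * w ^ p)"

lemma Eu_summable_norm:
  assumes q: "0 < q" "q < 1" and w: "norm w < 1"
  shows "summable (\<lambda>p. norm (inverse (qpoch (complex_of_real q) (complex_of_real q) p) * w ^ p))"
proof -
  obtain C where C: "\<And>n. norm (1 / qpoch (complex_of_real q) (complex_of_real q) n) \<le> C"
    using qf_inv_bounded[OF q] by blast
  have "summable (\<lambda>p. C * norm w ^ p)" using w by (intro summable_mult summable_geometric) auto
  moreover have "norm (norm (inverse (qpoch (complex_of_real q) (complex_of_real q) p) * w ^ p)) \<le> C * norm w ^ p" for p
  proof -
    have "norm (norm (inverse (qpoch (complex_of_real q) (complex_of_real q) p) * w ^ p))
        = norm (1 / qpoch (complex_of_real q) (complex_of_real q) p) * norm w ^ p"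
      by (simp add: norm_mult norm_power divide_inverse)
    also have "\<dots> \<le> C * norm w ^ p" by (rule mult_right_mono[OF C]) auto
    finally show ?thesis .
  qed
  ultimately show ?thesis by (rule summable_comparison_test'[where N=0])
qed

lemma Eu_sums:
  assumes q: "0 < q" "q < 1" and w: "norm w < 1"
  shows "(\<lambda>p. inverse (qpoch (complex_of_real q) (complex_of_real q) p) * w ^ p) sums Eu q w"
  unfolding Eu_def by (rule summable_sums, rule summable_norm_cancel, rule Eu_summable_norm[OF q w])

lemma norm_mult_Q_pow_le:
  assumes q: "0 < q" "q < 1"
  shows "norm (w * complex_of_real q ^ N) \<le> norm w"
proof -
  have "q ^ N \<le> 1" using q by (simp add: power_le_one)
  hence "norm w * q ^ N \<le> norm w * 1" by (rule mult_left_mono) auto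
  thus ?thesis using q by (simp add: norm_mult norm_power)
qed

lemma Eu_shift:
  assumes q: "0 < q" "q < 1" and w: "norm w < 1"
  shows "Eu q w * (1 - w) = Eu q (w * complex_of_real q)"
proof -
  define Q where "Q = complex_of_real q"
  define f where "f = (\<lambda>p. inverse (qpoch Q Q p) * w ^ p)"
  define g where "g = (\<lambda>p. inverse (qpoch Q Q p) * (w * Q) ^ p)"
  have wQ: "norm (w * Q) < 1" using norm_mult_Q_pow_le[OF q, of w 1] w by (simp add: Q_def)
  have f: "f sums Eu q w" using Eu_sums[OF q w] by (simp add: f_def Q_def)
  have g: "g sums Eu q (w * Q)" using Eu_sums[OF q wQ] by (simp add: g_def Q_def)
  have h: "(\<lambda>p. f p - g p) sums (Eu q w - Eu q (w * Q))" by (rule sums_diff[OF f g])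
  have hs: "f (Suc p) - g (Suc p) = w * f p" for p
  proof -
    have nz: "qpoch Q Q p \<noteq> 0" "1 - Q * Q ^ p \<noteq> 0"
      using qf_nonzero[OF q, of "Suc p"] by (auto simp: Q_def qpoch_Suc)
    define a where "a = Q * Q ^ p"
    have "(w * Q) ^ Suc p = w ^ Suc p * a" by (simp add: a_def power_mult_distrib)
    hence "f (Suc p) - g (Suc p) = inverse (qpoch Q Q p * (1 - a)) * w ^ Suc p
            - inverse (qpoch Q Q p * (1 - a)) * (w ^ Suc p * a)"
      by (simp add: f_def g_def qpoch_Suc a_def)
    also have "\<dots> = (w ^ Suc p * (1 - a)) / (qpoch Q Q p * (1 - a))"
      by (simp add: algebra_simps divide_inverse)
    also have "\<dots> = w ^ Suc p / qpoch Q Q p"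
      using nz unfolding a_def[symmetric] by simp
    also have "\<dots> = w * (inverse (qpoch Q Q p) * w ^ p)"
      by (simp add: divide_inverse)
    finally show ?thesis by (simp add: f_def)
  qed
  have "(\<lambda>p. w * f p) sums (w * Eu q w)" by (rule sums_mult[OF f])
  hence "(\<lambda>p. f (Suc p) - g (Suc p)) sums (w * Eu q w)" by (simp add: hs)
  hence "(\<lambda>p. f p - g p) sums (w * Eu q w + (f 0 - g 0))"
    using sums_Suc_iff[of "\<lambda>p. f p - g p" "w * Eu q w"] by blast
  hence "(\<lambda>p. f p - g p) sums (w * Eu q w)" by (simp add: f_def g_def)
  with h have "Eu q w - Eu q (w * Q) = w * Eu q w" by (rule sums_unique2)
  thus ?thesis by (simp add: Q_def algebra_simps)
qed

lemma Eu_iter: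
  assumes q: "0 < q" "q < 1" and z: "norm z < 1"
  shows "Eu q z * qpoch z (complex_of_real q) N = Eu q (z * complex_of_real q ^ N)"
proof (induction N)
  case 0 thus ?case by simp
next
  case (Suc N)
  have n: "norm (z * complex_of_real q ^ N) < 1" using norm_mult_Q_pow_le[OF q, of z N] z by simp
  have "Eu q z * qpoch z (complex_of_real q) (Suc N)
       = Eu q (z * complex_of_real q ^ N) * (1 - z * complex_of_real q ^ N)"
    using Suc by (simp add: qpoch_Suc mult.assoc[symmetric])
  also have "\<dots> = Eu q (z * complex_of_real q ^ N * complex_of_real q)" by (rule Eu_shift[OF q n])
  finally show ?case by (simp add: ac_simps)
qed

lemma Eu_cont0:
  assumes q: "0 < q" "q < 1"
  shows "isCont (Eu q) 0"
proof -
  have "summable (\<lambda>n. inverse (qpoch (complex_of_real q) (complex_of_real q) n) * (1/2) ^ n)"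
    by (rule summable_norm_cancel, rule Eu_summable_norm[OF q]) simp
  hence "isCont (\<lambda>w. \<Sum>n. inverse (qpoch (complex_of_real q) (complex_of_real q) n) * w ^ n) 0"
    by (rule isCont_powser) simp
  thus ?thesis unfolding Eu_def[abs_def] .
qed

lemma Eu_qpoch_inf:
  assumes q: "0 < q" "q < 1" and z: "norm z < 1"
  shows "Eu q z * qpoch_inf z (complex_of_real q) = 1"
proof -
  define Q where "Q = complex_of_real q"
  have nQ: "norm Q < 1" using q by (simp add: Q_def)
  have "(\<lambda>N. z * Q ^ N) \<longlonglongrightarrow> z * 0" by (intro tendsto_intros nQ)
  hence "(\<lambda>N. Eu q (z * Q ^ N)) \<longlonglongrightarrow> Eu q 0"
    using isCont_tendsto_compose[OF Eu_cont0[OF q]] by simp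
  moreover have "Eu q 0 = 1" by (simp add: Eu_def)
  ultimately have t1: "(\<lambda>N. Eu q z * qpoch z Q N) \<longlonglongrightarrow> 1"
    using Eu_iter[OF q z] by (simp add: Q_def)
  have s: "summable (\<lambda>k. norm (z * Q ^ k))"
    using q z by (simp add: norm_mult norm_power Q_def)
  have "z * Q ^ k \<noteq> 1" for k using norm_mult_Q_pow_le[OF q, of z k] z by (auto simp: Q_def)
  hence "convergent_prod (\<lambda>k. 1 + (- (z * Q ^ k)))"
    by (intro summable_imp_convergent_prod_complex) (use s in \<open>auto simp: add_eq_0_iff\<close>)
  hence cp: "convergent_prod (\<lambda>k. 1 - z * Q ^ k)" by simp
  have "(\<lambda>n. \<Prod>i\<le>n. 1 - z * Q ^ i) \<longlonglongrightarrow> qpoch_inf z Q"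
    using convergent_prod_LIMSEQ[OF cp] by (simp add: qpoch_inf_def)
  hence "(\<lambda>n. qpoch z Q (Suc n)) \<longlonglongrightarrow> qpoch_inf z Q"
    by (simp add: qpoch_def lessThan_Suc_atMost)
  hence "(\<lambda>n. qpoch z Q n) \<longlonglongrightarrow> qpoch_inf z Q" by (rule LIMSEQ_imp_Suc)
  hence "(\<lambda>N. Eu q z * qpoch z Q N) \<longlonglongrightarrow> Eu q z * qpoch_inf z Q" by (intro tendsto_intros)
  from LIMSEQ_unique[OF this t1] show ?thesis by (simp add: Q_def)
qed

lemma euler_sums:
  assumes q: "0 < q" "q < 1" and z: "norm z < 1"
  shows "qpoch_inf z (complex_of_real q) \<noteq> 0"
    and "(\<lambda>p. (z * complex_of_real q ^ j) ^ p / qpoch (complex_of_real q) (complex_of_real q) p)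
           sums (qpoch z (complex_of_real q) j / qpoch_inf z (complex_of_real q))"
proof -
  have E: "Eu q z * qpoch_inf z (complex_of_real q) = 1" by (rule Eu_qpoch_inf[OF q z])
  thus nz: "qpoch_inf z (complex_of_real q) \<noteq> 0" by auto
  have n: "norm (z * complex_of_real q ^ j) < 1" using norm_mult_Q_pow_le[OF q, of z j] z by simp
  have "(\<lambda>p. inverse (qpoch (complex_of_real q) (complex_of_real q) p) * (z * complex_of_real q ^ j) ^ p)
          sums Eu q (z * complex_of_real q ^ j)" by (rule Eu_sums[OF q n])
  moreover have "Eu q (z * complex_of_real q ^ j) = qpoch z (complex_of_real q) j / qpoch_inf z (complex_of_real q)"
    using Eu_iter[OF q z, of j, symmetric] E nz by (simp add: field_simps)
  ultimately show "(\<lambda>p. (z * complex_of_real q ^ j) ^ p / qpoch (complex_of_real q) (complex_of_real q) p)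
           sums (qpoch z (complex_of_real q) j / qpoch_inf z (complex_of_real q))"
    by (simp add: divide_inverse mult.commute)
qed

definition gbr :: "complex \<Rightarrow> nat \<Rightarrow> nat \<Rightarrow> complex" where
  "gbr Q n k = (if k \<le> n then qpoch Q Q n / (qpoch Q Q k * qpoch Q Q (n - k)) else 0)"

lemma gbr_0[simp]: "qpoch Q Q n \<noteq> 0 \<Longrightarrow> gbr Q n 0 = 1"
  by (simp add: gbr_def)

lemma gbr_gt[simp]: "n < k \<Longrightarrow> gbr Q n k = 0" by (simp add: gbr_def)

lemma gbr_nz_le: "gbr Q n k \<noteq> 0 \<Longrightarrow> k \<le> n" by (auto simp: gbr_def split: if_splits)

lemma gbr_pascal:
  assumes nz: "\<And>i. qpoch Q Q i \<noteq> 0"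
  shows "gbr Q (Suc n) (Suc k) = gbr Q n k + Q ^ Suc k * gbr Q n (Suc k)"
proof (cases "k < n")
  case True
  define a where "a = qpoch Q Q k"
  define b where "b = qpoch Q Q (n - Suc k)"
  define c where "c = qpoch Q Q n"
  define X where "X = Q ^ Suc k"
  define Y where "Y = Q ^ (n - k)"
  have nk: "n - k = Suc (n - Suc k)" using True by simp
  have XY: "X * Y = Q ^ Suc n" using True by (simp add: X_def Y_def power_add[symmetric])
  have e1: "qpoch Q Q (Suc n) = c * (1 - X * Y)" by (simp add: qpoch_Suc c_def XY)
  have e2: "qpoch Q Q (Suc k) = a * (1 - X)" by (simp add: qpoch_Suc a_def X_def)
  have e3: "qpoch Q Q (n - k) = b * (1 - Y)" unfolding nk by (simp add: qpoch_Suc b_def Y_def nk)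
  have nzs: "a \<noteq> 0" "b \<noteq> 0" "c \<noteq> 0" "1 - X \<noteq> 0" "1 - Y \<noteq> 0"
    using nz[of k] nz[of "n - Suc k"] nz[of n] nz[of "Suc k"] nz[of "n - k"] e2 e3
    by (auto simp: a_def b_def c_def)
  have l: "gbr Q (Suc n) (Suc k) = c * (1 - X * Y) / (a * (1 - X) * (b * (1 - Y)))"
    using True by (simp add: gbr_def e1 e2 e3[symmetric])
  have r1: "gbr Q n k = c / (a * (b * (1 - Y)))"
    using True by (simp add: gbr_def e3[symmetric] a_def c_def)
  have r2: "gbr Q n (Suc k) = c / (a * (1 - X) * b)"
    using True by (simp add: gbr_def e2[symmetric] b_def c_def)
  have "c / (a * (b * (1 - Y))) + X * (c / (a * (1 - X) * b)) = (c * (1 - X) + X * c * (1 - Y)) / (a * (1 - X) * (b * (1 - Y)))"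
    using nzs by (simp add: divide_simps)
  also have "c * (1 - X) + X * c * (1 - Y) = c * (1 - X * Y)" by (simp add: algebra_simps)
  finally show ?thesis unfolding l r1 r2 X_def[symmetric] by simp
next
  case False
  show ?thesis
  proof (cases "k = n")
    case True
    have "qpoch Q Q (Suc n) \<noteq> 0" by (rule nz)
    thus ?thesis using True nz[of n] by (simp add: gbr_def)
  next
    case False
    with \<open>\<not> k < n\<close> show ?thesis by (simp add: gbr_def)
  qed
qed

lemma exp_aux:
  assumes "j \<le> k'" "Suc k' - j \<le> (n::nat)"
  shows "Suc (k' - j) + j * (n + j - k') = Suc k' + j * (n + j - Suc k')"
proof -
  obtain d where d: "k' = j + d" using assms(1) le_Suc_ex by blast
  obtain e where e: "n = Suc d + e" using assms(2) d le_Suc_ex by (metis Suc_diff_le add_diff_cancel_left' le_add1)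
  show ?thesis unfolding d e by (simp add: algebra_simps)
qed

lemma qvandermonde:
  assumes nz: "\<And>i. qpoch Q Q i \<noteq> 0"
  shows "(\<Sum>j\<le>k. gbr Q m j * gbr Q n (k - j) * Q ^ (j * (n + j - k))) = gbr Q (m + n) k"
proof (induction n arbitrary: k)
  case 0
  have "(\<Sum>j\<le>k. gbr Q m j * gbr Q 0 (k - j) * Q ^ (j * (0 + j - k)))
      = (\<Sum>j\<le>k. if j = k then gbr Q m k else 0)"
    by (rule sum.cong) (auto simp: gbr_def nz)
  thus ?case by simp
next
  case (Suc n)
  show ?case
  proof (cases k)
    case 0 thus ?thesis by (simp add: nz)
  next
    case (Suc k')
    define H where "H j = gbr Q m j * gbr Q n (Suc k' - j) * Q ^ (Suc k' + j * (n + j - Suc k'))" for j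
    have split: "gbr Q m j * gbr Q (Suc n) (Suc k' - j) * Q ^ (j * (Suc n + j - Suc k'))
        = gbr Q m j * gbr Q n (k' - j) * Q ^ (j * (n + j - k')) + H j" if "j \<le> k'" for j
    proof -
      have sk: "Suc k' - j = Suc (k' - j)" using that by simp
      have hj: "gbr Q m j * Q ^ Suc (k' - j) * gbr Q n (Suc k' - j) * Q ^ (j * (n + j - k')) = H j"
      proof (cases "Suc k' - j \<le> n")
        case True
        have "Q ^ (Suc k' + j * (n + j - Suc k')) = Q ^ Suc (k' - j) * Q ^ (j * (n + j - k'))"
          by (simp only: exp_aux[OF that True, symmetric] power_add)
        thus ?thesis unfolding H_def by (simp only: ac_simps)
      next
        case False thus ?thesis by (simp add: H_def)
      qed
      have A: "gbr Q (Suc n) (Suc k' - j) = gbr Q n (k' - j) + Q ^ Suc (k' - j) * gbr Q n (Suc k' - j)"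
        using gbr_pascal[OF nz, of n "k' - j"] sk by simp
      have B: "Suc n + j - Suc k' = n + j - k'" by simp
      have "gbr Q m j * gbr Q (Suc n) (Suc k' - j) * Q ^ (j * (Suc n + j - Suc k'))
          = gbr Q m j * gbr Q n (k' - j) * Q ^ (j * (n + j - k'))
            + gbr Q m j * Q ^ Suc (k' - j) * gbr Q n (Suc k' - j) * Q ^ (j * (n + j - k'))"
        unfolding A B by (simp only: distrib_left distrib_right ac_simps)
      thus ?thesis unfolding hj .
    qed
    have ex: "Suc k' * (Suc n + Suc k' - Suc k') = Suc k' + Suc k' * (n + Suc k' - Suc k')" by simp
    have last: "gbr Q m (Suc k') * gbr Q (Suc n) (Suc k' - Suc k') * Q ^ (Suc k' * (Suc n + Suc k' - Suc k'))
        = H (Suc k')"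
      unfolding H_def ex by (simp add: nz)
    have "(\<Sum>j\<le>k. gbr Q m j * gbr Q (Suc n) (k - j) * Q ^ (j * (Suc n + j - k)))
       = (\<Sum>j\<le>k'. gbr Q m j * gbr Q (Suc n) (Suc k' - j) * Q ^ (j * (Suc n + j - Suc k')))
         + H (Suc k')"
      unfolding Suc sum.atMost_Suc last ..
    also have "(\<Sum>j\<le>k'. gbr Q m j * gbr Q (Suc n) (Suc k' - j) * Q ^ (j * (Suc n + j - Suc k')))
       = (\<Sum>j\<le>k'. gbr Q m j * gbr Q n (k' - j) * Q ^ (j * (n + j - k')) + H j)"
      by (rule sum.cong[OF refl], rule split) simp
    also have "\<dots> = gbr Q (m + n) k' + (\<Sum>j\<le>k'. H j)"
      by (simp only: sum.distrib Suc.IH)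
    also have "gbr Q (m + n) k' + (\<Sum>j\<le>k'. H j) + H (Suc k') = gbr Q (m + n) k' + (\<Sum>j\<le>Suc k'. H j)"
      by simp
    also have "(\<Sum>j\<le>Suc k'. H j) = Q ^ Suc k' * (\<Sum>j\<le>Suc k'. gbr Q m j * gbr Q n (Suc k' - j) * Q ^ (j * (n + j - Suc k')))"
      unfolding sum_distrib_left H_def power_add by (simp only: ac_simps)
    also have "\<dots> = Q ^ Suc k' * gbr Q (m + n) (Suc k')" by (simp only: Suc.IH)
    also have "gbr Q (m + n) k' + Q ^ Suc k' * gbr Q (m + n) (Suc k') = gbr Q (m + Suc n) k"
      using gbr_pascal[OF nz, of "m + n" k'] by (simp add: Suc)
    finally show ?thesis .
  qed
qed

lemma gbr_qpoch_form:
  assumes nz: "\<And>i. qpoch Q Q i \<noteq> 0" and "j \<le> n"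
  shows "gbr Q n j = qpoch (Q ^ (n - j + 1)) Q j / qpoch Q Q j"
proof -
  have "qpoch Q Q n = qpoch Q Q (n - j) * qpoch (Q ^ (n - j + 1)) Q j"
    using qpoch_add[of Q Q "n - j" j] assms(2) by (simp add: mult.commute)
  thus ?thesis using assms nz[of "n - j"] by (simp add: gbr_def field_simps)
qed

lemma qbinom_gbr: "k \<le> n \<Longrightarrow> qbinom Q n k = gbr Q n k"
  by (simp add: qbinom_def gbr_def)

lemma summable_on_times_nonneg:
  fixes f g :: "_ \<Rightarrow> real"
  assumes f: "f summable_on A" and g: "g summable_on B" and "\<And>x. 0 \<le> f x" "\<And>y. 0 \<le> g y"
  shows "(\<lambda>(x,y). f x * g y) summable_on (A \<times> B)"
proof (rule summable_on_SigmaI[where g="\<lambda>x. f x * infsum g B"])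
  fix x assume "x \<in> A"
  show "((\<lambda>y. case (x, y) of (x, y) \<Rightarrow> f x * g y) has_sum f x * infsum g B) B"
    using has_sum_cmult_right[OF has_sum_infsum[OF g], of "f x"] by simp
next
  show "(\<lambda>x. f x * infsum g B) summable_on A" by (rule summable_on_cmult_left[OF f])
next
  fix x y show "0 \<le> (case (x, y) of (x, y) \<Rightarrow> f x * g y)" using assms(3,4) by simp
qed

lemma geom_summable_on:
  assumes "0 \<le> (a::real)" "a < 1"
  shows "(\<lambda>n::nat. a ^ n) summable_on UNIV"
  using assms by (subst summable_on_UNIV_nonneg_real_iff) (auto intro: summable_geometric)

locale th6_setup =
  fixes q :: real and A B :: "nat \<Rightarrow> complex" and x1 y1 x2 y2 t :: complex and CA CB :: real
  assumes q: "0 < q" "q < 1" and x1: "x1 \<noteq> 0"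
    and conv: "norm t * max (norm x1) (norm y1) * max (norm x2) (norm y2) < 1"
    and bA: "\<And>k. norm (A k) \<le> CA" and bB: "\<And>k. norm (B k) \<le> CB"
begin

abbreviation "Q \<equiv> complex_of_real q"
abbreviation "qf n \<equiv> qpoch Q Q n"

definition G :: "nat \<times> nat \<times> nat \<times> nat \<Rightarrow> complex" where
  "G = (\<lambda>(n,j,l,p). B n * (x1*y2*t)^n / qf n * (gbr Q n j * (y1/x1)^j)
          * (A (j+l) * (x2*y1*t)^l / qf l) * ((x1*x2*t*Q^j)^p / qf p))"

lemma qf_nz: "qf n \<noteq> 0" by (rule qf_nonzero[OF q])

lemma G_zero: "n < j \<Longrightarrow> G (n,j,l,p) = 0" by (simp add: G_def)

lemma mono4: "0 \<le> a \<Longrightarrow> a \<le> (a'::real) \<Longrightarrow> 0 \<le> b \<Longrightarrow> b \<le> b' \<Longrightarrow> a * b \<le> a' * b'"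
  by (meson mult_mono order.trans)

lemma G_summable: "G summable_on UNIV"
proof -
  obtain CQ where CQ: "\<And>n. norm (1 / qf n) \<le> CQ" using qf_inv_bounded[OF q] by blast
  have CQ0: "0 \<le> CQ" using CQ[of 0] norm_ge_zero order.trans by blast
  define CP where "CP = exp (norm Q / (1 - q))"
  have CP: "norm (qf n) \<le> CP" for n unfolding CP_def by (rule qpoch_norm_bound[OF q])
  have CP0: "0 \<le> CP" by (simp add: CP_def)
  have gb: "norm (gbr Q n j) \<le> CP * CQ * CQ" for n j
  proof (cases "j \<le> n")
    case True
    have "norm (gbr Q n j) = norm (qf n) * norm (1 / qf j) * norm (1 / qf (n - j))"
      using True by (simp add: gbr_def norm_mult norm_divide)
    also have "\<dots> \<le> CP * CQ * CQ"
      by (intro mono4 CP CQ CQ0 CP0 mult_nonneg_nonneg norm_ge_zero)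
    finally show ?thesis .
  next
    case False thus ?thesis using CP0 CQ0 by simp
  qed
  have CA0: "0 \<le> CA" using bA[of 0] norm_ge_zero order.trans by blast
  have CB0: "0 \<le> CB" using bB[of 0] norm_ge_zero order.trans by blast
  define M1 where "M1 = max (norm x1) (norm y1)"
  define M2 where "M2 = max (norm x2) (norm y2)"
  define T where "T = norm t"
  have M1: "norm x1 \<le> M1" "norm y1 \<le> M1" and M2: "norm x2 \<le> M2" "norm y2 \<le> M2"
    by (auto simp: M1_def M2_def)
  have T0: "0 \<le> T" by (simp add: T_def)
  have TMM: "T * M1 * M2 < 1" using conv by (simp add: T_def M1_def M2_def)
  have lt: "T * u * v < 1" if "0 \<le> u" "u \<le> M1" "0 \<le> v" "v \<le> M2" for u v
  proof -
    have "T * u * v \<le> T * M1 * M2" using that T0 by (intro mono4 mult_nonneg_nonneg) auto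
    thus ?thesis using TMM by linarith
  qed
  define \<rho> where "\<rho> = T * norm y2 * M1"
  define \<alpha> where "\<alpha> = norm (x2*y1*t)"
  define \<beta> where "\<beta> = norm (x1*x2*t)"
  have \<rho>: "0 \<le> \<rho>" "\<rho> < 1" unfolding \<rho>_def using lt[of M1 "norm y2"] M1 M2 T0
    by (auto simp: mult_ac intro!: mult_nonneg_nonneg order.trans[OF norm_ge_zero M1(1)])
  have \<alpha>: "0 \<le> \<alpha>" "\<alpha> < 1" unfolding \<alpha>_def using lt[of "norm y1" "norm x2"] M1 M2
    by (auto simp: norm_mult T_def mult_ac)
  have \<beta>: "0 \<le> \<beta>" "\<beta> < 1" unfolding \<beta>_def using lt[of "norm x1" "norm x2"] M1 M2
    by (auto simp: norm_mult T_def mult_ac)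
  define \<gamma> where "\<gamma> = sqrt \<rho>"
  have \<gamma>: "0 \<le> \<gamma>" "\<gamma> < 1" using \<rho> by (auto simp: \<gamma>_def)
  define K where "K = CB * CQ * (CP * CQ * CQ) * (CA * CQ) * CQ"
  have K0: "0 \<le> K" unfolding K_def using CA0 CB0 CQ0 CP0 by simp
  define H where "H = (\<lambda>(n::nat, j::nat, l::nat, p::nat). K * (\<gamma> ^ n * (\<gamma> ^ j * (\<alpha> ^ l * \<beta> ^ p))))"
  have Hs: "H summable_on UNIV"
  proof -
    have "(\<lambda>(l,p). \<alpha> ^ l * \<beta> ^ p) summable_on (UNIV \<times> UNIV)"
      by (rule summable_on_times_nonneg[OF geom_summable_on geom_summable_on]) (use \<alpha> \<beta> in auto)
    hence s1: "(\<lambda>(l,p). \<alpha> ^ l * \<beta> ^ p) summable_on UNIV" by simp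
    have "(\<lambda>(j,lp). \<gamma> ^ j * (case lp of (l,p) \<Rightarrow> \<alpha> ^ l * \<beta> ^ p)) summable_on (UNIV \<times> UNIV)"
      by (rule summable_on_times_nonneg[OF geom_summable_on s1]) (use \<alpha> \<beta> \<gamma> in auto)
    hence s2: "(\<lambda>(j,lp). \<gamma> ^ j * (case lp of (l,p) \<Rightarrow> \<alpha> ^ l * \<beta> ^ p)) summable_on UNIV" by simp
    have "(\<lambda>(n,jlp). \<gamma> ^ n * (case jlp of (j,lp) \<Rightarrow> \<gamma> ^ j * (case lp of (l,p) \<Rightarrow> \<alpha> ^ l * \<beta> ^ p))) summable_on (UNIV \<times> UNIV)"
      by (rule summable_on_times_nonneg[OF geom_summable_on s2]) (use \<alpha> \<beta> \<gamma> in auto)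
    hence "(\<lambda>(n,jlp). \<gamma> ^ n * (case jlp of (j,lp) \<Rightarrow> \<gamma> ^ j * (case lp of (l,p) \<Rightarrow> \<alpha> ^ l * \<beta> ^ p))) summable_on UNIV" by simp
    hence "(\<lambda>x. K * (case x of (n,jlp) \<Rightarrow> \<gamma> ^ n * (case jlp of (j,lp) \<Rightarrow> \<gamma> ^ j * (case lp of (l,p) \<Rightarrow> \<alpha> ^ l * \<beta> ^ p)))) summable_on UNIV"
      by (rule summable_on_cmult_right)
    moreover have "H = (\<lambda>x. K * (case x of (n,jlp) \<Rightarrow> \<gamma> ^ n * (case jlp of (j,lp) \<Rightarrow> \<gamma> ^ j * (case lp of (l,p) \<Rightarrow> \<alpha> ^ l * \<beta> ^ p))))"
      by (rule ext) (simp add: H_def split: prod.splits)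
    ultimately show ?thesis by simp
  qed
  have bound: "norm (G x) \<le> H x" for x
  proof -
    obtain n j l p where x: "x = (n,j,l,p)" by (metis prod.exhaust)
    show ?thesis
    proof (cases "j \<le> n")
      case False thus ?thesis using K0 \<alpha> \<beta> \<gamma> by (simp add: x G_def H_def)
    next
      case True
      have mon: "(x1*y2*t)^n * (y1/x1)^j = (y2*t)^n * x1^(n-j) * y1^j"
      proof -
        have "x1 ^ n = x1 ^ (n - j) * x1 ^ j" using True by (simp add: power_add[symmetric])
        thus ?thesis using x1 by (simp add: power_mult_distrib power_divide field_simps)
      qed
      have f1: "norm ((x1*y2*t)^n * (y1/x1)^j) \<le> \<rho> ^ n"
      proof -
        have "norm ((x1*y2*t)^n * (y1/x1)^j) = (T * norm y2) ^ n * norm x1 ^ (n - j) * norm y1 ^ j"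
          unfolding mon by (simp add: norm_mult norm_power T_def mult_ac)
        also have "\<dots> \<le> (T * norm y2) ^ n * M1 ^ (n - j) * M1 ^ j"
          by (intro mono4 power_mono M1 mult_nonneg_nonneg zero_le_power T0 norm_ge_zero order.refl)
        also have "\<dots> = \<rho> ^ n" using True
          by (simp add: \<rho>_def power_add[symmetric] power_mult_distrib mult.assoc)
        finally show ?thesis .
      qed
      have f1': "\<rho> ^ n \<le> \<gamma> ^ n * \<gamma> ^ j"
      proof -
        have "\<rho> ^ n = (\<gamma> ^ 2) ^ n" using real_sqrt_pow2[OF \<rho>(1)] by (simp add: \<gamma>_def)
        also have "\<dots> = \<gamma> ^ (n + n)" by (simp add: power_mult[symmetric] mult_2)
        also have "\<dots> \<le> \<gamma> ^ (n + j)" using \<gamma> True by (intro power_decreasing) auto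
        finally show ?thesis by (simp add: power_add)
      qed
      have f2: "norm (A (j+l) * (x2*y1*t)^l / qf l) \<le> CA * CQ * \<alpha> ^ l"
      proof -
        have "norm (A (j+l) * (x2*y1*t)^l / qf l) = norm (A (j+l)) * norm (1 / qf l) * \<alpha> ^ l"
          by (simp add: norm_mult norm_divide norm_power \<alpha>_def)
        also have "\<dots> \<le> CA * CQ * \<alpha> ^ l"
          by (intro mono4 bA CQ norm_ge_zero mult_nonneg_nonneg order.refl zero_le_power \<alpha>)
        finally show ?thesis .
      qed
      have f3: "norm ((x1*x2*t*Q^j)^p / qf p) \<le> CQ * \<beta> ^ p"
      proof -
        have "norm ((x1*x2*t*Q^j)^p / qf p) = norm (1 / qf p) * norm (x1*x2*t*Q^j) ^ p"
          by (simp add: norm_divide norm_power)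
        also have "\<dots> \<le> CQ * \<beta> ^ p" unfolding \<beta>_def
          by (intro mono4 CQ power_mono norm_mult_Q_pow_le[OF q] norm_ge_zero zero_le_power)
        finally show ?thesis .
      qed
      have "norm (G x) = norm (B n) * norm (1 / qf n) * norm (gbr Q n j) * norm ((x1*y2*t)^n * (y1/x1)^j)
            * norm (A (j+l) * (x2*y1*t)^l / qf l) * norm ((x1*x2*t*Q^j)^p / qf p)"
        by (simp add: x G_def norm_mult norm_divide)
      also have "\<dots> \<le> CB * CQ * (CP * CQ * CQ) * (\<gamma> ^ n * \<gamma> ^ j) * (CA * CQ * \<alpha> ^ l) * (CQ * \<beta> ^ p)"
        by (intro mono4 bB CQ gb order.trans[OF f1 f1'] f2 f3 norm_ge_zero mult_nonneg_nonneg
              CB0 CQ0 CP0 CA0 zero_le_power \<alpha> \<beta> \<gamma>)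
      also have "\<dots> = H x" by (simp add: x H_def K_def mult_ac)
      finally show ?thesis .
    qed
  qed
  have "(\<lambda>x. norm (G x)) summable_on UNIV"
    by (rule summable_on_comparison_test[OF Hs]) (use bound in auto)
  thus ?thesis by (simp add: summable_on_iff_abs_summable_on_complex)
qed

end

context th6_setup begin

lemma mon_eq:
  "(x1*y2*t)^(j+a) * (y1/x1)^j * (x2*y1*t)^l * (x1*x2*t*Q^j)^p
     = y2^(j+a) * t^(j+a+l+p) * y1^(j+l) * x2^(l+p) * x1^(a+p) * Q^(j*p)"
  using x1 by (simp add: power_mult_distrib power_add power_divide power_mult field_simps)

lemma G_T:
  "G (j+a, j, l, p) = B (j+a) * A (j+l) * y2^(j+a) * t^(j+a+l+p) * y1^(j+l) * x2^(l+p) * x1^(a+p)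
      / (qf (j+a) * qf (l+p)) * (gbr Q (j+a) j * gbr Q (l+p) l * Q^(j*p))"
proof -
  have g: "gbr Q (l+p) l = qf (l+p) / (qf l * qf p)" by (simp add: gbr_def)
  have "G (j+a, j, l, p) = B (j+a) * A (j+l) * gbr Q (j+a) j / (qf (j+a) * qf l * qf p)
      * ((x1*y2*t)^(j+a) * (y1/x1)^j * (x2*y1*t)^l * (x1*x2*t*Q^j)^p)"
    by (simp add: G_def field_simps qf_nz)
  also have "\<dots> = B (j+a) * A (j+l) * gbr Q (j+a) j / (qf (j+a) * qf l * qf p)
      * (y2^(j+a) * t^(j+a+l+p) * y1^(j+l) * x2^(l+p) * x1^(a+p) * Q^(j*p))"
    unfolding mon_eq ..
  also have "\<dots> = B (j+a) * A (j+l) * y2^(j+a) * t^(j+a+l+p) * y1^(j+l) * x2^(l+p) * x1^(a+p)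
      / (qf (j+a) * qf (l+p)) * (gbr Q (j+a) j * gbr Q (l+p) l * Q^(j*p))"
    unfolding g using qf_nz by (simp add: field_simps)
  finally show ?thesis .
qed

definition Tt :: "nat \<Rightarrow> nat \<Rightarrow> nat \<Rightarrow> nat \<Rightarrow> complex" where
  "Tt N n j k = B n * A k * y2^n * t^N * y1^k * x2^(N-n) * x1^(N-k) / (qf n * qf (N-n))
      * (gbr Q n j * gbr Q (N-n) (k-j) * Q^(j*((N-n)+j-k)))"

lemma G_Tt:
  assumes "j \<le> n" "l \<le> N - n" "n \<le> N"
  shows "G (n, j, l, N-n-l) = Tt N n j (j+l)"
proof -
  have e1: "j + (n - j) = n" "j + (n-j) + l + (N-n-l) = N" "l + (N-n-l) = N - n"
     "n + l + (N-n-l) = N" "n - j + (N-n-l) = N - (j+l)" "N - n + j - (j+l) = N-n-l" "j + l - j = l"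
    using assms by auto
  show ?thesis using G_T[of j "n-j" l "N-n-l"] unfolding Tt_def by (simp only: e1)
qed

lemma Tt_zero: "n < j \<or> N - n < k - j \<Longrightarrow> Tt N n j k = 0"
  by (auto simp: Tt_def)

lemma reindex_Tt:
  assumes "n \<le> N"
  shows "(\<Sum>j\<le>n. \<Sum>l\<le>N-n. Tt N n j (j+l)) = (\<Sum>k\<le>N. \<Sum>j\<le>k. Tt N n j k)"
proof -
  define Sg where "Sg = (SIGMA k:{..N}. {..k})"
  define h where "h = (\<lambda>(j::nat,l::nat). (j+l, j))"
  define D where "D = h ` ({..n} \<times> {..N-n})"
  have "(\<Sum>k\<le>N. \<Sum>j\<le>k. Tt N n j k) = (\<Sum>(k,j)\<in>Sg. Tt N n j k)"
    unfolding Sg_def by (rule sum.Sigma) auto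
  also have "\<dots> = (\<Sum>(k,j)\<in>D. Tt N n j k)"
  proof (rule sum.mono_neutral_right)
    show "finite Sg" unfolding Sg_def by auto
    show "D \<subseteq> Sg" using assms by (auto simp: D_def Sg_def h_def)
    show "\<forall>i\<in>Sg - D. (case i of (k, j) \<Rightarrow> Tt N n j k) = 0"
    proof
      fix i assume i: "i \<in> Sg - D"
      obtain k j where kj: "i = (k,j)" by (metis prod.exhaust)
      have "j \<le> k" using i kj by (auto simp: Sg_def)
      have "\<not> (j \<le> n \<and> k - j \<le> N - n)"
      proof
        assume "j \<le> n \<and> k - j \<le> N - n"
        hence "h (j, k - j) \<in> D" by (auto simp: D_def)
        moreover have "h (j, k-j) = i" using \<open>j \<le> k\<close> kj by (simp add: h_def)
        ultimately show False using i by simp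
      qed
      thus "(case i of (k, j) \<Rightarrow> Tt N n j k) = 0" using kj Tt_zero by auto
    qed
  qed
  also have "\<dots> = (\<Sum>x\<in>{..n} \<times> {..N-n}. (case h x of (k,j) \<Rightarrow> Tt N n j k))"
    unfolding D_def by (rule sum.reindex_cong[OF _ refl refl]) (auto simp: inj_on_def h_def)
  also have "\<dots> = (\<Sum>(j,l)\<in>{..n} \<times> {..N-n}. Tt N n j (j+l))"
    by (rule sum.cong) (auto simp: h_def)
  also have "\<dots> = (\<Sum>j\<le>n. \<Sum>l\<le>N-n. Tt N n j (j+l))"
    by (rule sum.cartesian_product[symmetric])
  finally show ?thesis ..
qed

lemma sum_Tt:
  assumes "n \<le> N"
  shows "(\<Sum>j\<le>k. Tt N n j k) = B n * A k * y2^n * t^N * y1^k * x2^(N-n) * x1^(N-k) / (qf n * qf (N-n)) * gbr Q N k"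
proof -
  have "(\<Sum>j\<le>k. Tt N n j k) = B n * A k * y2^n * t^N * y1^k * x2^(N-n) * x1^(N-k) / (qf n * qf (N-n))
      * (\<Sum>j\<le>k. gbr Q n j * gbr Q (N-n) (k-j) * Q^(j*((N-n)+j-k)))"
    unfolding Tt_def sum_distrib_left ..
  also have "(\<Sum>j\<le>k. gbr Q n j * gbr Q (N-n) (k-j) * Q^(j*((N-n)+j-k))) = gbr Q (n + (N-n)) k"
    by (rule qvandermonde) (rule qf_nz)
  finally show ?thesis using assms by simp
qed

lemma fiber_n:
  assumes "n \<le> N"
  shows "(\<Sum>j\<le>n. \<Sum>l\<le>N-n. G (n,j,l,N-n-l))
     = gbr Q N n * B n * x2^(N-n) * y2^n * t^N / qf N * (\<Sum>k\<le>N. gbr Q N k * A k * x1^(N-k) * y1^k)"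
proof -
  have "(\<Sum>j\<le>n. \<Sum>l\<le>N-n. G (n,j,l,N-n-l)) = (\<Sum>j\<le>n. \<Sum>l\<le>N-n. Tt N n j (j+l))"
    by (intro sum.cong refl G_Tt) (use assms in auto)
  also have "\<dots> = (\<Sum>k\<le>N. \<Sum>j\<le>k. Tt N n j k)" by (rule reindex_Tt[OF assms])
  also have "\<dots> = (\<Sum>k\<le>N. B n * A k * y2^n * t^N * y1^k * x2^(N-n) * x1^(N-k) / (qf n * qf (N-n)) * gbr Q N k)"
    by (intro sum.cong refl sum_Tt[OF assms])
  also have "\<dots> = gbr Q N n * B n * x2^(N-n) * y2^n * t^N / qf N * (\<Sum>k\<le>N. gbr Q N k * A k * x1^(N-k) * y1^k)"
    unfolding sum_distrib_left
  proof (rule sum.cong[OF refl])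
    fix k
    have "gbr Q N n / qf N = 1 / (qf n * qf (N-n))" using assms qf_nz[of N] by (simp add: gbr_def)
    have "gbr Q N n * B n * x2^(N-n) * y2^n * t^N / qf N * (gbr Q N k * A k * x1^(N-k) * y1^k)
        = (gbr Q N n / qf N) * (B n * A k * y2^n * t^N * y1^k * x2^(N-n) * x1^(N-k) * gbr Q N k)"
      by (simp only: divide_inverse mult_ac)
    also have "\<dots> = B n * A k * y2^n * t^N * y1^k * x2^(N-n) * x1^(N-k) / (qf n * qf (N-n)) * gbr Q N k"
      unfolding \<open>gbr Q N n / qf N = _\<close> by simp
    finally show "B n * A k * y2^n * t^N * y1^k * x2^(N-n) * x1^(N-k) / (qf n * qf (N-n)) * gbr Q N k
        = gbr Q N n * B n * x2^(N-n) * y2^n * t^N / qf N * (gbr Q N k * A k * x1^(N-k) * y1^k)" ..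
  qed
  finally show ?thesis .
qed

definition LHS :: "nat \<Rightarrow> complex" where
  "LHS N = (\<Sum>k\<le>N. gbr Q N k * A k * x1^(N-k) * y1^k) * (\<Sum>m\<le>N. gbr Q N m * B m * x2^(N-m) * y2^m)
            * t^N / qf N"

definition Fb :: "nat \<Rightarrow> (nat \<times> nat \<times> nat \<times> nat) set" where
  "Fb N = {(n,j,l,p). j \<le> n \<and> n + l + p = N}"

lemma fiber_sum: "sum G (Fb N) = LHS N"
proof -
  define SA where "SA = (\<Sum>k\<le>N. gbr Q N k * A k * x1^(N-k) * y1^k)"
  define D where "D = (SIGMA n:{..N}. SIGMA j:{..n}. {..N-n})"
  define h where "h = (\<lambda>(n::nat,j::nat,l::nat). (n,j,l,N-n-l))"
  have FD: "Fb N = h ` D"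
  proof (rule set_eqI, rule iffI)
    fix x assume "x \<in> Fb N"
    then obtain n j l p where x: "x = (n,j,l,p)" "j \<le> n" "n + l + p = N" by (auto simp: Fb_def)
    hence "(n,j,l) \<in> D" "h (n,j,l) = x" by (auto simp: D_def h_def)
    thus "x \<in> h ` D" by force
  next
    fix x assume "x \<in> h ` D" thus "x \<in> Fb N" by (auto simp: D_def h_def Fb_def)
  qed
  have "sum G (Fb N) = (\<Sum>x\<in>D. G (h x))"
    unfolding FD by (rule sum.reindex_cong[OF _ refl refl]) (auto simp: inj_on_def h_def)
  also have "\<dots> = (\<Sum>(n,jl)\<in>D. case jl of (j,l) \<Rightarrow> G (n,j,l,N-n-l))"
    by (rule sum.cong) (auto simp: h_def)
  also have "\<dots> = (\<Sum>n\<le>N. \<Sum>(j,l)\<in>{..n}\<times>{..N-n}. G (n,j,l,N-n-l))"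
    unfolding D_def by (subst sum.Sigma) auto
  also have "\<dots> = (\<Sum>n\<le>N. \<Sum>j\<le>n. \<Sum>l\<le>N-n. G (n,j,l,N-n-l))"
    by (simp add: sum.cartesian_product)
  also have "\<dots> = (\<Sum>n\<le>N. gbr Q N n * B n * x2^(N-n) * y2^n * t^N / qf N * SA)"
    unfolding SA_def by (intro sum.cong refl fiber_n) auto
  also have "\<dots> = (\<Sum>n\<le>N. gbr Q N n * B n * x2^(N-n) * y2^n) * (SA * t^N / qf N)"
    unfolding sum_distrib_right by (intro sum.cong refl) (simp only: divide_inverse mult_ac)
  also have "\<dots> = LHS N" unfolding LHS_def SA_def[symmetric] by (simp only: divide_inverse mult_ac)
  finally show ?thesis .
qed

lemma LHS_sums: "LHS sums (infsum G UNIV)"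
proof -
  define s where "s = infsum G UNIV"
  define S where "S = {(n::nat,j::nat,l::nat,p::nat). j \<le> n}"
  have hU: "(G has_sum s) UNIV" unfolding s_def using G_summable by (simp add: summable_iff_has_sum_infsum)
  have z: "G x = 0" if "x \<notin> S" for x
  proof -
    obtain n j l p where x: "x = (n,j,l,p)" by (metis prod.exhaust)
    show ?thesis using that unfolding x S_def by (simp add: G_zero)
  qed
  have "(G has_sum s) S \<longleftrightarrow> (G has_sum s) UNIV"
    by (rule has_sum_cong_neutral) (use z in auto)
  hence hS: "(G has_sum s) S" using hU by blast
  have bij: "bij_betw snd (SIGMA N:UNIV. Fb N) S"
  proof (rule bij_betw_byWitness[where f'="\<lambda>x. (case x of (n,j,l,p) \<Rightarrow> n+l+p, x)"])
    show "\<forall>a\<in>(SIGMA N:UNIV. Fb N). (case snd a of (n,j,l,p) \<Rightarrow> n+l+p, snd a) = a"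
      by (clarsimp simp: Fb_def)
    show "\<forall>a'\<in>S. snd (case a' of (n,j,l,p) \<Rightarrow> n+l+p, a') = a'" by simp
    show "snd ` (SIGMA N:UNIV. Fb N) \<subseteq> S"
      by (clarsimp simp: Fb_def S_def)
    show "(\<lambda>x. (case x of (n,j,l,p) \<Rightarrow> n+l+p, x)) ` S \<subseteq> (SIGMA N:UNIV. Fb N)"
      by (clarsimp simp: Fb_def S_def)
  qed
  have re: "((\<lambda>x. G (snd x)) has_sum s) (SIGMA N:UNIV. Fb N)"
    by (rule iffD2[OF has_sum_reindex_bij_betw[OF bij] hS])
  have fin: "finite (Fb N)" for N
  proof (rule finite_subset)
    show "Fb N \<subseteq> {..N} \<times> {..N} \<times> {..N} \<times> {..N}" by (clarsimp simp: Fb_def)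
  qed auto
  have inner: "((\<lambda>y. G (snd (N, y))) has_sum sum G (Fb N)) (Fb N)" for N
    using has_sum_finite[OF fin[of N], of G] by simp
  have "((\<lambda>N. sum G (Fb N)) has_sum s) UNIV"
    by (rule has_sum_SigmaD[OF re inner])
  hence "(LHS has_sum s) UNIV" by (simp only: fiber_sum)
  thus ?thesis unfolding s_def by (rule has_sum_imp_sums)
qed

end

context th6_setup begin

definition kap :: "nat \<Rightarrow> nat \<Rightarrow> complex" where
  "kap n j = B n * (x1*y2*t)^n / qf n * (gbr Q n j * (y1/x1)^j)"
definition uu :: "nat \<Rightarrow> nat \<Rightarrow> complex" where
  "uu j l = A (j+l) * (x2*y1*t)^l / qf l"
definition vv :: "nat \<Rightarrow> nat \<Rightarrow> complex" where
  "vv j p = (x1*x2*t*Q^j)^p / qf p"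

lemma G_split: "G (n,j,l,p) = kap n j * uu j l * vv j p"
  by (simp add: G_def kap_def uu_def vv_def mult.assoc)

lemma norm_z: "norm (x1*x2*t) < 1" and norm_c2: "norm (x2*y1*t) < 1"
proof -
  define M1 where "M1 = max (norm x1) (norm y1)"
  define M2 where "M2 = max (norm x2) (norm y2)"
  have TMM: "norm t * M1 * M2 < 1" using conv by (simp add: M1_def M2_def)
  have lt: "norm t * u * v < 1" if "0 \<le> u" "u \<le> M1" "0 \<le> v" "v \<le> M2" for u v
  proof -
    have "norm t * u * v \<le> norm t * M1 * M2" using that by (intro mono4 mult_nonneg_nonneg) auto
    thus ?thesis using TMM by linarith
  qed
  show "norm (x1*x2*t) < 1" using lt[of "norm x1" "norm x2"] by (simp add: norm_mult M1_def M2_def mult_ac)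
  show "norm (x2*y1*t) < 1" using lt[of "norm y1" "norm x2"] by (simp add: norm_mult M1_def M2_def mult_ac)
qed

lemma uu_norm_summable: "summable (\<lambda>l. norm (uu j l))"
proof -
  obtain CQ where CQ: "\<And>n. norm (1 / qf n) \<le> CQ" using qf_inv_bounded[OF q] by blast
  define \<alpha> where "\<alpha> = norm (x2*y1*t)"
  have \<alpha>: "0 \<le> \<alpha>" "\<alpha> < 1" using norm_c2 by (auto simp: \<alpha>_def)
  have "summable (\<lambda>l. CA * CQ * \<alpha> ^ l)" using \<alpha> by (intro summable_mult summable_geometric) auto
  moreover have "norm (norm (uu j l)) \<le> CA * CQ * \<alpha> ^ l" for l
  proof -
    have "norm (norm (uu j l)) = norm (A (j+l)) * norm (1 / qf l) * \<alpha> ^ l"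
      by (simp add: uu_def norm_mult norm_divide norm_power \<alpha>_def)
    also have "\<dots> \<le> CA * CQ * \<alpha> ^ l"
      by (intro mono4 bA CQ norm_ge_zero mult_nonneg_nonneg order.refl zero_le_power \<alpha>)
    finally show ?thesis .
  qed
  ultimately show ?thesis by (rule summable_comparison_test'[where N=0])
qed

abbreviation "z \<equiv> x1*x2*t"
abbreviation "P \<equiv> qpoch_inf z Q"

lemma P_nz: "P \<noteq> 0" by (rule euler_sums(1)[OF q norm_z])

lemma vv_has_sum: "((vv j) has_sum (qpoch z Q j / P)) UNIV"
proof (rule norm_summable_imp_has_sum)
  have n: "norm (z * Q ^ j) < 1" using norm_mult_Q_pow_le[OF q, of z j] norm_z by simp
  show "summable (\<lambda>p. norm (vv j p))"
    using Eu_summable_norm[OF q n] by (simp add: vv_def divide_inverse mult.commute)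
  show "vv j sums (qpoch z Q j / P)"
    using euler_sums(2)[OF q norm_z, of j] by (simp add: vv_def[abs_def])
qed

lemma uu_has_sum: "((uu j) has_sum (suminf (uu j))) UNIV"
  by (rule norm_summable_imp_has_sum[OF uu_norm_summable summable_sums[OF summable_norm_cancel[OF uu_norm_summable]]])

definition W :: "nat \<Rightarrow> nat \<Rightarrow> complex" where
  "W n j = kap n j * suminf (uu j) * (qpoch z Q j / P)"

lemma G_summable_n: "(\<lambda>r. G (n, r)) summable_on UNIV"
proof -
  have "(\<lambda>(x,y). (\<lambda>n r. G (n, r)) x y) summable_on (SIGMA x:UNIV. UNIV)"
    using G_summable by simp
  from summable_on_SigmaD1[OF this] show ?thesis by simp
qed

lemma G_summable_nj: "(\<lambda>r. G (n, j, r)) summable_on UNIV"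
proof -
  have e: "(\<lambda>(x,y). (\<lambda>j r. G (n, j, r)) x y) = (\<lambda>r. G (n, r))" by (rule ext) auto
  have "(\<lambda>(x,y). (\<lambda>j r. G (n, j, r)) x y) summable_on (SIGMA x:UNIV. UNIV)"
    using G_summable_n[of n] unfolding e by simp
  from summable_on_SigmaD1[OF this] show ?thesis by simp
qed

lemma G_has_sum_nj: "((\<lambda>r. G (n, j, r)) has_sum W n j) UNIV"
proof -
  have e: "(\<lambda>r. G (n, j, r)) = (\<lambda>(l,p). kap n j * uu j l * vv j p)"
    by (auto simp: G_split)
  have "((\<lambda>(l,p). kap n j * uu j l * vv j p) has_sum W n j) (SIGMA l:UNIV. UNIV)"
  proof (rule has_sum_SigmaI[where g="\<lambda>l. kap n j * uu j l * (qpoch z Q j / P)"])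
    fix l
    show "((\<lambda>p. case (l, p) of (l, p) \<Rightarrow> kap n j * uu j l * vv j p) has_sum kap n j * uu j l * (qpoch z Q j / P)) UNIV"
      using has_sum_cmult_right[OF vv_has_sum[of j], of "kap n j * uu j l"] by simp
  next
    show "((\<lambda>l. kap n j * uu j l * (qpoch z Q j / P)) has_sum W n j) UNIV"
      unfolding W_def
      using has_sum_cmult_left[OF has_sum_cmult_right[OF uu_has_sum[of j], of "kap n j"], of "qpoch z Q j / P"]
      by simp
  next
    show "(\<lambda>(l,p). kap n j * uu j l * vv j p) summable_on (SIGMA l:UNIV. UNIV)"
      using G_summable_nj[of n j] unfolding e by simp
  qed
  thus ?thesis unfolding e by simp
qed

lemma W_zero: "n < j \<Longrightarrow> W n j = 0" by (simp add: W_def kap_def)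

lemma G_has_sum_n: "((\<lambda>r. G (n, r)) has_sum (\<Sum>j\<le>n. W n j)) UNIV"
proof -
  define Sn where "Sn = infsum (\<lambda>r. G (n, r)) UNIV"
  have h: "((\<lambda>r. G (n, r)) has_sum Sn) UNIV"
    unfolding Sn_def using G_summable_n by (simp add: summable_iff_has_sum_infsum)
  have h': "((\<lambda>(j,r). G (n, j, r)) has_sum Sn) (SIGMA j:UNIV. UNIV)"
    using h by (simp add: case_prod_unfold)
  have "(W n has_sum Sn) UNIV"
    by (rule has_sum_SigmaD[OF h']) (use G_has_sum_nj in simp)
  moreover have "(W n has_sum (\<Sum>j\<le>n. W n j)) UNIV"
  proof -
    have "(W n has_sum (\<Sum>j\<le>n. W n j)) {..n}" by (rule has_sum_finite) simp
    moreover have "(W n has_sum (\<Sum>j\<le>n. W n j)) {..n} \<longleftrightarrow> (W n has_sum (\<Sum>j\<le>n. W n j)) UNIV"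
      by (rule has_sum_cong_neutral) (auto simp: W_zero)
    ultimately show ?thesis by blast
  qed
  ultimately have "Sn = (\<Sum>j\<le>n. W n j)" by (rule has_sum_unique)
  thus ?thesis using h by simp
qed

lemma RHS_sums0: "(\<lambda>n. \<Sum>j\<le>n. W n j) sums (infsum G UNIV)"
proof -
  have h: "(G has_sum infsum G UNIV) UNIV" using G_summable by (simp add: summable_iff_has_sum_infsum)
  have h': "((\<lambda>(n,r). G (n, r)) has_sum infsum G UNIV) (SIGMA n:UNIV. UNIV)"
    using h by (simp add: case_prod_unfold)
  have "((\<lambda>n. \<Sum>j\<le>n. W n j) has_sum infsum G UNIV) UNIV"
    by (rule has_sum_SigmaD[OF h']) (use G_has_sum_n in simp)
  thus ?thesis by (rule has_sum_imp_sums)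
qed

lemma RHS_sums: "(\<lambda>n. \<Sum>j\<le>n. kap n j * suminf (uu j) * qpoch z Q j) sums (infsum G UNIV * P)"
proof -
  have "(\<lambda>n. (\<Sum>j\<le>n. W n j) * P) sums (infsum G UNIV * P)" by (rule sums_mult2[OF RHS_sums0])
  moreover have "(\<Sum>j\<le>n. W n j) * P = (\<Sum>j\<le>n. kap n j * suminf (uu j) * qpoch z Q j)" for n
    unfolding sum_distrib_right W_def using P_nz by (intro sum.cong refl) simp
  ultimately show ?thesis by simp
qed

end

lemma mono4g: "0 \<le> a \<Longrightarrow> a \<le> (a'::real) \<Longrightarrow> 0 \<le> b \<Longrightarrow> b \<le> b' \<Longrightarrow> a * b \<le> a' * b'"
  by (meson mult_mono order.trans)

lemma A_bound:
  assumes q: "0 < q" "q < 1"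
    and d: "\<forall>m::nat. d \<noteq> 1 / complex_of_real q ^ m"
    and e: "\<forall>m::nat. e \<noteq> 1 / complex_of_real q ^ m"
  shows "\<exists>C. \<forall>k. norm (qpoch a (complex_of_real q) k * qpoch b (complex_of_real q) k * qpoch c (complex_of_real q) k
            / (qpoch d (complex_of_real q) k * qpoch e (complex_of_real q) k)) \<le> C"
proof -
  obtain Cd where Cd: "\<And>n. norm (1 / qpoch d (complex_of_real q) n) \<le> Cd" using qpoch_inv_bounded[OF q d] by blast
  obtain Ce where Ce: "\<And>n. norm (1 / qpoch e (complex_of_real q) n) \<le> Ce" using qpoch_inv_bounded[OF q e] by blast
  define Ea where "Ea = exp (norm a / (1 - q))"
  define Eb where "Eb = exp (norm b / (1 - q))"
  define Ec where "Ec = exp (norm c / (1 - q))"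
  have "norm (qpoch a (complex_of_real q) k * qpoch b (complex_of_real q) k * qpoch c (complex_of_real q) k
            / (qpoch d (complex_of_real q) k * qpoch e (complex_of_real q) k)) \<le> Ea * Eb * Ec * Cd * Ce" for k
  proof -
    have "norm (qpoch a (complex_of_real q) k * qpoch b (complex_of_real q) k * qpoch c (complex_of_real q) k
            / (qpoch d (complex_of_real q) k * qpoch e (complex_of_real q) k))
       = norm (qpoch a (complex_of_real q) k) * norm (qpoch b (complex_of_real q) k) * norm (qpoch c (complex_of_real q) k)
         * norm (1 / qpoch d (complex_of_real q) k) * norm (1 / qpoch e (complex_of_real q) k)"
      by (simp add: norm_mult norm_divide)
    also have "\<dots> \<le> Ea * Eb * Ec * Cd * Ce"
      unfolding Ea_def Eb_def Ec_def
      by (intro mono4g qpoch_norm_bound[OF q] Cd Ce norm_ge_zero mult_nonneg_nonneg)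
    finally show ?thesis .
  qed
  thus ?thesis by blast
qed

theorem theorem6:
  fixes q :: real and a1 b1 c1 d1 e1 x1 y1 a2 b2 c2 d2 e2 x2 y2 t :: complex
  assumes q: "0 < q" "q < 1"
    and d1: "\<forall>m::nat. d1 \<noteq> 1 / complex_of_real q ^ m"
    and e1: "\<forall>m::nat. e1 \<noteq> 1 / complex_of_real q ^ m"
    and d2: "\<forall>m::nat. d2 \<noteq> 1 / complex_of_real q ^ m"
    and e2: "\<forall>m::nat. e2 \<noteq> 1 / complex_of_real q ^ m"
    and x1: "x1 \<noteq> 0"
    and conv: "norm t * max (norm x1) (norm y1) * max (norm x2) (norm y2) < 1"
  shows
    "let Q = complex_of_real q;
         R = (\<lambda>n. qpoch a2 Q n * qpoch b2 Q n * qpoch c2 Q n * (x1 * y2 * t) ^ n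
                   / (qpoch Q Q n * qpoch d2 Q n * qpoch e2 Q n)
              * (\<Sum>j\<le>n. qpoch (Q ^ (n - j + 1)) Q j * qpoch (x1 * x2 * t) Q j
                           * qpoch a1 Q j * qpoch b1 Q j * qpoch c1 Q j
                           / (qpoch Q Q j * qpoch d1 Q j * qpoch e1 Q j) * (y1 / x1) ^ j
                     * (\<Sum>l. qpoch (a1 * Q ^ j) Q l * qpoch (b1 * Q ^ j) Q l
                              * qpoch (c1 * Q ^ j) Q l
                            / (qpoch Q Q l * qpoch (d1 * Q ^ j) Q l * qpoch (e1 * Q ^ j) Q l)
                            * (x2 * y1 * t) ^ l)))
     in summable R \<and>
        (\<lambda>n. qphi a1 b1 c1 d1 e1 x1 y1 Q n * qphi a2 b2 c2 d2 e2 x2 y2 Q n * t ^ n / qpoch Q Q n)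
          sums ((1 / qpoch_inf (x1 * x2 * t) Q) * (\<Sum>n. R n))"
proof -
  define Q where "Q = complex_of_real q"
  define A where "A k = qpoch a1 Q k * qpoch b1 Q k * qpoch c1 Q k / (qpoch d1 Q k * qpoch e1 Q k)" for k
  define B where "B k = qpoch a2 Q k * qpoch b2 Q k * qpoch c2 Q k / (qpoch d2 Q k * qpoch e2 Q k)" for k
  obtain CA where CA: "\<And>k. norm (A k) \<le> CA" using A_bound[OF q d1 e1, of a1 b1 c1] by (auto simp: A_def Q_def)
  obtain CB where CB: "\<And>k. norm (B k) \<le> CB" using A_bound[OF q d2 e2, of a2 b2 c2] by (auto simp: B_def Q_def)
  interpret S: th6_setup q A B x1 y1 x2 y2 t CA CB
    by unfold_locales (use q x1 conv CA CB in auto)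
  have nzQ: "\<And>i. qpoch Q Q i \<noteq> 0" unfolding Q_def by (rule qf_nonzero[OF q])
  define R where "R = (\<lambda>n. qpoch a2 Q n * qpoch b2 Q n * qpoch c2 Q n * (x1 * y2 * t) ^ n
                   / (qpoch Q Q n * qpoch d2 Q n * qpoch e2 Q n)
              * (\<Sum>j\<le>n. qpoch (Q ^ (n - j + 1)) Q j * qpoch (x1 * x2 * t) Q j
                           * qpoch a1 Q j * qpoch b1 Q j * qpoch c1 Q j
                           / (qpoch Q Q j * qpoch d1 Q j * qpoch e1 Q j) * (y1 / x1) ^ j
                     * (\<Sum>l. qpoch (a1 * Q ^ j) Q l * qpoch (b1 * Q ^ j) Q l
                              * qpoch (c1 * Q ^ j) Q l
                            / (qpoch Q Q l * qpoch (d1 * Q ^ j) Q l * qpoch (e1 * Q ^ j) Q l)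
                            * (x2 * y1 * t) ^ l)))"
  define sh where "sh j l = qpoch (a1 * Q ^ j) Q l * qpoch (b1 * Q ^ j) Q l
                              * qpoch (c1 * Q ^ j) Q l
                            / (qpoch Q Q l * qpoch (d1 * Q ^ j) Q l * qpoch (e1 * Q ^ j) Q l)
                            * (x2 * y1 * t) ^ l" for j l
  have uu_sh: "S.uu j l = A j * sh j l" for j l
    unfolding S.uu_def A_def sh_def Q_def[symmetric]
    by (simp only: qpoch_add divide_inverse inverse_mult_distrib mult_ac)
  have suminf_uu: "suminf (S.uu j) = A j * suminf (sh j)" for j
  proof (cases "A j = 0")
    case True
    hence "S.uu j = (\<lambda>l. 0)" using uu_sh by auto
    thus ?thesis using True by simp
  next
    case False
    have "summable (S.uu j)" by (rule summable_norm_cancel[OF S.uu_norm_summable])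
    hence "summable (\<lambda>l. S.uu j l / A j)" by (rule summable_divide)
    hence "summable (sh j)" using False by (simp add: uu_sh)
    moreover have "S.uu j = (\<lambda>l. A j * sh j l)" using uu_sh by auto
    ultimately show ?thesis by (simp add: suminf_mult)
  qed
  have R_eq: "R n = (\<Sum>j\<le>n. S.kap n j * suminf (S.uu j) * qpoch (x1*x2*t) Q j)" for n
  proof -
    have "R n = (\<Sum>j\<le>n. B n * (x1*y2*t)^n / qpoch Q Q n * (qpoch (Q ^ (n - j + 1)) Q j / qpoch Q Q j
                * (y1/x1)^j * (A j * suminf (sh j)) * qpoch (x1*x2*t) Q j))"
      unfolding R_def sum_distrib_left sh_def[abs_def] A_def B_def
      by (intro sum.cong refl) (simp only: divide_inverse inverse_mult_distrib mult_ac)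
    also have "\<dots> = (\<Sum>j\<le>n. S.kap n j * suminf (S.uu j) * qpoch (x1*x2*t) Q j)"
    proof (intro sum.cong refl)
      fix j assume "j \<in> {..n}"
      hence g: "gbr Q n j = qpoch (Q ^ (n - j + 1)) Q j / qpoch Q Q j" by (intro gbr_qpoch_form nzQ) auto
      show "B n * (x1*y2*t)^n / qpoch Q Q n * (qpoch (Q ^ (n - j + 1)) Q j / qpoch Q Q j
                * (y1/x1)^j * (A j * suminf (sh j)) * qpoch (x1*x2*t) Q j)
          = S.kap n j * suminf (S.uu j) * qpoch (x1*x2*t) Q j"
        unfolding S.kap_def suminf_uu Q_def[symmetric] g by (simp only: divide_inverse mult_ac)
    qed
    finally show ?thesis .
  qed
  have Rs: "R sums (infsum S.G UNIV * qpoch_inf (x1*x2*t) Q)"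
    using S.RHS_sums unfolding R_eq[abs_def] Q_def .
  have LHS_eq: "qphi a1 b1 c1 d1 e1 x1 y1 Q n * qphi a2 b2 c2 d2 e2 x2 y2 Q n * t ^ n / qpoch Q Q n = S.LHS n" for n
  proof -
    have "qphi a1 b1 c1 d1 e1 x1 y1 Q n = (\<Sum>k\<le>n. gbr Q n k * A k * x1^(n-k) * y1^k)"
      unfolding qphi_def A_def by (intro sum.cong refl) (simp add: qbinom_gbr)
    moreover have "qphi a2 b2 c2 d2 e2 x2 y2 Q n = (\<Sum>k\<le>n. gbr Q n k * B k * x2^(n-k) * y2^k)"
      unfolding qphi_def B_def by (intro sum.cong refl) (simp add: qbinom_gbr)
    ultimately show ?thesis unfolding S.LHS_def Q_def by simp
  qed
  have Ls: "(\<lambda>n. qphi a1 b1 c1 d1 e1 x1 y1 Q n * qphi a2 b2 c2 d2 e2 x2 y2 Q n * t ^ n / qpoch Q Q n)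
      sums infsum S.G UNIV"
    unfolding LHS_eq by (rule S.LHS_sums)
  have Pnz: "qpoch_inf (x1*x2*t) Q \<noteq> 0" unfolding Q_def by (rule S.P_nz)
  have "summable R" using Rs by (rule sums_summable)
  moreover have "1 / qpoch_inf (x1*x2*t) Q * suminf R = infsum S.G UNIV"
    unfolding sums_unique[OF Rs, symmetric] using Pnz by simp
  ultimately show ?thesis unfolding Let_def Q_def[symmetric] R_def[symmetric] using Ls by simp
qed


end
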